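(* Let $n\ge 1$, let $\chi$ be an irreducible character of $S_n$, let $1\le k\le n$, let $X\in M_n(\mathbb{C})$ and fix $\alpha\in Q_{k,n}$. Then $$d_\chi(X)=\sum_{\beta\in Q_{k,n}} d_\chi\Big(X[\alpha|\beta]\bigoplus_{\alpha|\beta}X(\alpha|\beta)\Big).$$
   Context: $d_\chi(A)=\sum_{\sigma\in S_n}\chi(\sigma)\prod_{i=1}^n a_{i\sigma(i)}$ for $A=(a_{ij})\in M_n(\mathbb{C})$. $Q_{k,n}$ is the set of strictly increasing maps $\{1,\ldots,k\}\to\{1,\ldots,n\}$. For $\alpha\in Q_{k,n}$, $\bar\alpha$ is the unique element of $Q_{n-k,n}$ whose image is the complement of the image of $\alpha$. For $\alpha,\beta\in Q_{k,n}$, $X[\alpha|\beta]$ is the $k\times k$ matrix with $(i,j)$ entry $x_{\alpha(i)\beta(j)}$, and $X(\alpha|\beta)$ is the $(n-k)\times(n-k)$ matrix obtained from $X$ by deleting rows $\alpha(1),\ldots,\alpha(k)$ and columns $\beta(1),\ldots,\beta(k)$. For a $k\times k$ matrix $P=(p_{ij})$ and an $(n-k)\times(n-k)$ matrix $R=(r_{ij})$, $P\bigoplus_{\alpha|\beta}R=(y_{ij})$ is the $n\times n$ matrix with $y_{ij}=0$ if exactly one of $i\in\operatorname{Im}\alpha$, $j\in\operatorname{Im}\beta$ holds; $y_{ij}=p_{\alpha^{-1}(i)\beta^{-1}(j)}$ if $i\in\operatorname{Im}\alpha$ and $j\in\operatorname{Im}\beta$; and $y_{ij}=r_{\bar\alpha^{-1}(i)\bar\beta^{-1}(j)}$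 if $i\notin\operatorname{Im}\alpha$ and $j\notin\operatorname{Im}\beta$. *)

theory Defs
  imports "HOL-Combinatorics.Permutations" "Jordan_Normal_Form.Matrix"
begin

text \<open>Conventions: indices are 1-based. An n x n complex matrix is a function
  nat => nat => complex, of which only the entries with indices in {1..n} matter.
  S_n is the set of permutations of {1..n}.\<close>

definition Sym :: "nat \<Rightarrow> (nat \<Rightarrow> nat) set" where
  "Sym n = {\<sigma>. \<sigma> permutes {1..n}}"

definition is_rep :: "nat \<Rightarrow> nat \<Rightarrow> ((nat \<Rightarrow> nat) \<Rightarrow> complex mat) \<Rightarrow> bool" where
  "is_rep n d \<rho> \<longleftrightarrow> 0 < d \<and>
     (\<forall>\<sigma>\<in>Sym n. \<rho> \<sigma> \<in> carrier_mat d d) \<and>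
     \<rho> id = 1\<^sub>m d \<and>
     (\<forall>\<sigma>\<in>Sym n. \<forall>\<tau>\<in>Sym n. \<rho> (\<sigma> \<circ> \<tau>) = \<rho> \<sigma> * \<rho> \<tau>)"

definition is_subspace :: "nat \<Rightarrow> complex vec set \<Rightarrow> bool" where
  "is_subspace d W \<longleftrightarrow> W \<subseteq> carrier_vec d \<and> 0\<^sub>v d \<in> W \<and>
     (\<forall>v\<in>W. \<forall>w\<in>W. v + w \<in> W) \<and> (\<forall>c. \<forall>v\<in>W. c \<cdot>\<^sub>v v \<in> W)"

definition irreducible_rep :: "nat \<Rightarrow> nat \<Rightarrow> ((nat \<Rightarrow> nat) \<Rightarrow> complex mat) \<Rightarrow> bool" where
  "irreducible_rep n d \<rho> \<longleftrightarrow> is_rep n d \<rho> \<and>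
     (\<forall>W. is_subspace d W \<and> (\<forall>\<sigma>\<in>Sym n. \<forall>v\<in>W. \<rho> \<sigma> *\<^sub>v v \<in> W)
          \<longrightarrow> W = {0\<^sub>v d} \<or> W = carrier_vec d)"

definition mat_trace :: "complex mat \<Rightarrow> complex" where
  "mat_trace A = (\<Sum>i<dim_row A. A $$ (i, i))"

definition irreducible_character :: "nat \<Rightarrow> ((nat \<Rightarrow> nat) \<Rightarrow> complex) \<Rightarrow> bool" where
  "irreducible_character n \<chi> \<longleftrightarrow>
     (\<exists>d \<rho>. irreducible_rep n d \<rho> \<and> (\<forall>\<sigma>\<in>Sym n. \<chi> \<sigma> = mat_trace (\<rho> \<sigma>)))"

definition immanant :: "nat \<Rightarrow> ((nat \<Rightarrow> nat) \<Rightarrow> complex) \<Rightarrow> (nat \<Rightarrow> nat \<Rightarrow> complex) \<Rightarrow> complex" where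
  "immanant n \<chi> A = (\<Sum>\<sigma>\<in>Sym n. \<chi> \<sigma> * (\<Prod>i=1..n. A i (\<sigma> i)))"

text \<open>Q_{k,n}: strictly increasing maps {1..k} -> {1..n} (extended by 0 outside {1..k}).\<close>
definition Q :: "nat \<Rightarrow> nat \<Rightarrow> (nat \<Rightarrow> nat) set" where
  "Q k n = {f. (\<forall>i\<in>{1..k}. f i \<in> {1..n}) \<and> strict_mono_on {1..k} f \<and>
               (\<forall>i. i \<notin> {1..k} \<longrightarrow> f i = 0)}"

definition compl_map :: "nat \<Rightarrow> nat \<Rightarrow> (nat \<Rightarrow> nat) \<Rightarrow> (nat \<Rightarrow> nat)" where
  "compl_map k n \<alpha> = (THE g. g \<in> Q (n - k) n \<and> g ` {1..n-k} = {1..n} - \<alpha> ` {1..k})"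

definition submat :: "(nat \<Rightarrow> nat \<Rightarrow> complex) \<Rightarrow> (nat \<Rightarrow> nat) \<Rightarrow> (nat \<Rightarrow> nat) \<Rightarrow> nat \<Rightarrow> nat \<Rightarrow> complex" where
  "submat X \<alpha> \<beta> = (\<lambda>i j. X (\<alpha> i) (\<beta> j))"

definition delmat :: "nat \<Rightarrow> nat \<Rightarrow> (nat \<Rightarrow> nat \<Rightarrow> complex) \<Rightarrow> (nat \<Rightarrow> nat) \<Rightarrow> (nat \<Rightarrow> nat) \<Rightarrow> nat \<Rightarrow> nat \<Rightarrow> complex" where
  "delmat k n X \<alpha> \<beta> = (\<lambda>i j. X (compl_map k n \<alpha> i) (compl_map k n \<beta> j))"

definition dsum :: "nat \<Rightarrow> nat \<Rightarrow> (nat \<Rightarrow> nat) \<Rightarrow> (nat \<Rightarrow> nat) \<Rightarrow>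
    (nat \<Rightarrow> nat \<Rightarrow> complex) \<Rightarrow> (nat \<Rightarrow> nat \<Rightarrow> complex) \<Rightarrow> nat \<Rightarrow> nat \<Rightarrow> complex" where
  "dsum k n \<alpha> \<beta> P R = (\<lambda>i j.
     if i \<in> \<alpha> ` {1..k} \<and> j \<in> \<beta> ` {1..k}
       then P (inv_into {1..k} \<alpha> i) (inv_into {1..k} \<beta> j)
     else if i \<notin> \<alpha> ` {1..k} \<and> j \<notin> \<beta> ` {1..k}
       then R (inv_into {1..n-k} (compl_map k n \<alpha>) i) (inv_into {1..n-k} (compl_map k n \<beta>) j)
     else 0)"

end

theory Submission
  imports Defs
begin

definition enum :: "nat \<Rightarrow> nat set \<Rightarrow> nat \<Rightarrow> nat" where
  "enum m S = (\<lambda>i. if i \<in> {1..m} then sorted_list_of_set S ! (i - 1) else 0)"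

lemma enum_Q:
  assumes "S \<subseteq> {1..n}" "card S = m"
  shows "enum m S \<in> Q m n" "enum m S ` {1..m} = S"
proof -
  have fin: "finite S" using assms(1) finite_subset by blast
  define xs where "xs = sorted_list_of_set S"
  have len: "length xs = m" using assms fin by (simp add: xs_def)
  have st: "sorted_wrt (<) xs" by (simp add: xs_def)
  have sx: "set xs = S" using fin by (simp add: xs_def)
  have e: "enum m S = (\<lambda>i. if i \<in> {1..m} then xs ! (i - 1) else 0)"
    unfolding enum_def xs_def by (rule refl)
  have img: "enum m S ` {1..m} = S"
  proof -
    have "enum m S ` {1..m} = (\<lambda>i. xs ! (i - 1)) ` {1..m}" unfolding e by auto
    also have "\<dots> = (\<lambda>i. xs ! (i - 1)) ` (Suc ` {0..<m})"
      by (simp only: image_Suc_atLeastLessThan atLeastLessThanSuc_atLeastAtMost One_nat_def)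
    also have "\<dots> = (\<lambda>j. xs ! j) ` {0..<m}" by (simp only: image_image diff_Suc_1)
    also have "\<dots> = set xs" using len by (auto simp: set_conv_nth)
    finally show ?thesis using sx by simp
  qed
  show "enum m S ` {1..m} = S" by (rule img)
  show "enum m S \<in> Q m n"
    unfolding Q_def
  proof (intro CollectI conjI ballI allI impI)
    fix i assume "i \<in> {1..m}"
    then have "enum m S i \<in> S" using img by blast
    then show "enum m S i \<in> {1..n}" using assms by blast
  next
    show "strict_mono_on {1..m} (enum m S)"
      unfolding strict_mono_on_def
    proof (intro allI impI)
      fix r s assume rs: "r \<in> {1..m} \<and> s \<in> {1..m} \<and> r < s"
      have "xs ! (r - 1) < xs ! (s - 1)"
        by (rule sorted_wrt_nth_less[OF st]) (use rs len in auto)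
      then show "enum m S r < enum m S s" using rs unfolding e by simp
    qed
  next
    fix i assume "i \<notin> {1..m}" then show "enum m S i = 0" unfolding e by auto
  qed
qed

lemma Q_enum:
  assumes "g \<in> Q m n"
  shows "g = enum m (g ` {1..m})"
proof -
  have g1: "\<forall>i\<in>{1..m}. g i \<in> {1..n}" and g2: "strict_mono_on {1..m} g"
    and g3: "\<forall>i. i \<notin> {1..m} \<longrightarrow> g i = 0" using assms by (auto simp: Q_def)
  define ys where "ys = map g [1..<m+1]"
  have len: "length ys = m" by (simp add: ys_def)
  have st: "sorted_wrt (<) ys"
    unfolding sorted_wrt_iff_nth_less ys_def using g2
    by (auto simp: strict_mono_on_def simp del: upt_Suc)
  have sy: "set ys = g ` {1..m}" by (auto simp: ys_def)
  have sl: "sorted_list_of_set (g ` {1..m}) = ys"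
    using strict_sorted_equal[OF st, of "sorted_list_of_set (g ` {1..m})"] sy by simp
  show ?thesis
  proof (rule ext)
    fix i show "g i = enum m (g ` {1..m}) i"
    proof (cases "i \<in> {1..m}")
      case True
      then have i1: "i - 1 < m" and i2: "1 + (i - 1) = i" by auto
      have "ys ! (i - 1) = g i" unfolding ys_def using i1 i2 by (simp del: upt_Suc)
      then show ?thesis unfolding enum_def sl using True by simp
    next
      case False
      then have "g i = 0" using g3 by blast
      moreover have "enum m (g ` {1..m}) i = 0" unfolding enum_def using False by auto
      ultimately show ?thesis by simp
    qed
  qed
qed


lemma card_Q_img:
  assumes "g \<in> Q m n" shows "card (g ` {1..m}) = m" "g ` {1..m} \<subseteq> {1..n}"
proof -
  have "strict_mono_on {1..m} g" using assms by (simp add: Q_def)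
  then have "inj_on g {1..m}" by (rule strict_mono_on_imp_inj_on)
  then show "card (g ` {1..m}) = m" by (simp add: card_image)
  show "g ` {1..m} \<subseteq> {1..n}" using assms by (auto simp: Q_def)
qed

lemma compl_map_prop:
  assumes "\<alpha> \<in> Q k n"
  shows "compl_map k n \<alpha> \<in> Q (n - k) n \<and> compl_map k n \<alpha> ` {1..n-k} = {1..n} - \<alpha> ` {1..k}"
proof -
  define C where "C = {1..n} - \<alpha> ` {1..k}"
  have cC: "card C = n - k" unfolding C_def
    using card_Q_img[OF assms] by (simp add: card_Diff_subset finite_subset)
  have sC: "C \<subseteq> {1..n}" by (auto simp: C_def)
  let ?P = "\<lambda>g. g \<in> Q (n - k) n \<and> g ` {1..n-k} = C"
  have "?P (THE g. ?P g)"
  proof (rule theI[of ?P "enum (n-k) C"])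
    show "?P (enum (n-k) C)" using enum_Q[OF sC cC] by simp
  next
    fix g assume "?P g"
    then show "g = enum (n-k) C" using Q_enum by metis
  qed
  then show ?thesis unfolding compl_map_def C_def .
qed

lemma finite_Q: "finite (Q k n)"
proof -
  have "Q k n \<subseteq> (\<lambda>S. enum k S) ` Pow {1..n}"
  proof
    fix g assume g: "g \<in> Q k n"
    then have "g = enum k (g ` {1..k})" by (rule Q_enum)
    moreover have "g ` {1..k} \<in> Pow {1..n}" using card_Q_img[OF g] by simp
    ultimately show "g \<in> (\<lambda>S. enum k S) ` Pow {1..n}" by blast
  qed
  then show ?thesis by (rule finite_subset) simp
qed

lemma mult_if0: "c * (if b then p else 0) = (if b then c*p else (0::complex))"
  by simp

lemma dsum_in: "i \<in> \<alpha> ` {1..k} \<Longrightarrow> j \<in> \<beta> ` {1..k} \<Longrightarrow>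
  dsum k n \<alpha> \<beta> P R i j = P (inv_into {1..k} \<alpha> i) (inv_into {1..k} \<beta> j)"
  unfolding dsum_def by (simp only: conj_absorb if_True simp_thms)

lemma dsum_out: "i \<notin> \<alpha> ` {1..k} \<Longrightarrow> j \<notin> \<beta> ` {1..k} \<Longrightarrow>
  dsum k n \<alpha> \<beta> P R i j = R (inv_into {1..n-k} (compl_map k n \<alpha>) i) (inv_into {1..n-k} (compl_map k n \<beta>) j)"
  unfolding dsum_def by (simp only: conj_absorb if_True if_False simp_thms)

lemma dsum_mix: "i \<in> \<alpha> ` {1..k} \<Longrightarrow> j \<notin> \<beta> ` {1..k} \<Longrightarrow>
  dsum k n \<alpha> \<beta> P R i j = 0"
  unfolding dsum_def by (simp only: conj_absorb if_True if_False simp_thms)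

lemma key:
  assumes \<alpha>: "\<alpha> \<in> Q k n" and kn: "k \<le> n" and \<sigma>: "\<sigma> \<in> Sym n" and \<beta>: "\<beta> \<in> Q k n"
  shows "(\<Prod>i=1..n. dsum k n \<alpha> \<beta> (submat X \<alpha> \<beta>) (delmat k n X \<alpha> \<beta>) i (\<sigma> i)) =
     (if \<beta> = enum k (\<sigma> ` \<alpha> ` {1..k}) then (\<Prod>i=1..n. X i (\<sigma> i)) else 0)"
proof -
  define A where "A = \<alpha> ` {1..k}"
  define B where "B = \<beta> ` {1..k}"
  have perm: "\<sigma> permutes {1..n}" using \<sigma> by (simp add: Sym_def)
  have inj\<sigma>: "inj \<sigma>" using perm by (rule permutes_inj)
  have inS: "\<And>x. \<sigma> x \<in> {1..n} \<longleftrightarrow> x \<in> {1..n}" using perm by (rule permutes_in_image)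
  have cA: "card A = k" and sA: "A \<subseteq> {1..n}" using card_Q_img[OF \<alpha>] by (auto simp: A_def)
  have cB: "card B = k" and sB: "B \<subseteq> {1..n}" using card_Q_img[OF \<beta>] by (auto simp: B_def)
  have finB: "finite B" using sB finite_subset by blast
  have s\<sigma>A: "\<sigma> ` A \<subseteq> {1..n}" using sA inS by auto
  have c\<sigma>A: "card (\<sigma> ` A) = k" using cA card_image[OF inj_on_subset[OF inj\<sigma> subset_UNIV]] by simp
  show ?thesis
  proof (cases "\<beta> = enum k (\<sigma> ` A)")
    case True
    have BB: "B = \<sigma> ` A" unfolding B_def True using enum_Q[OF s\<sigma>A c\<sigma>A] by simp
    have CA: "compl_map k n \<alpha> ` {1..n-k} = {1..n} - A" using compl_map_prop[OF \<alpha>] by (simp add: A_def)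
    have CB: "compl_map k n \<beta> ` {1..n-k} = {1..n} - B" using compl_map_prop[OF \<beta>] by (simp add: B_def)
    have "(\<Prod>i=1..n. dsum k n \<alpha> \<beta> (submat X \<alpha> \<beta>) (delmat k n X \<alpha> \<beta>) i (\<sigma> i)) = (\<Prod>i=1..n. X i (\<sigma> i))"
    proof (rule prod.cong[OF refl])
      fix i assume i: "i \<in> {1..n}"
      have si: "\<sigma> i \<in> {1..n}" using i inS by simp
      have iff: "\<sigma> i \<in> B \<longleftrightarrow> i \<in> A" unfolding BB by (rule inj_image_mem_iff[OF inj\<sigma>])
      show "dsum k n \<alpha> \<beta> (submat X \<alpha> \<beta>) (delmat k n X \<alpha> \<beta>) i (\<sigma> i) = X i (\<sigma> i)"
      proof (cases "i \<in> A")
        case True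
        then have sb: "\<sigma> i \<in> B" using iff by simp
        have e1: "\<alpha> (inv_into {1..k} \<alpha> i) = i" using True unfolding A_def by (rule f_inv_into_f)
        have e2: "\<beta> (inv_into {1..k} \<beta> (\<sigma> i)) = \<sigma> i" using sb unfolding B_def by (rule f_inv_into_f)
        have "dsum k n \<alpha> \<beta> (submat X \<alpha> \<beta>) (delmat k n X \<alpha> \<beta>) i (\<sigma> i)
            = submat X \<alpha> \<beta> (inv_into {1..k} \<alpha> i) (inv_into {1..k} \<beta> (\<sigma> i))"
          using True sb unfolding A_def B_def by (rule dsum_in)
        also have "\<dots> = X i (\<sigma> i)" unfolding submat_def e1 e2 ..
        finally show ?thesis .
      next
        case False
        then have nb: "\<sigma> i \<notin> B" using iff by simp
        have i1: "i \<in> compl_map k n \<alpha> ` {1..n-k}" using CA i False by simp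
        have i2: "\<sigma> i \<in> compl_map k n \<beta> ` {1..n-k}" using CB si nb by simp
        have e1: "compl_map k n \<alpha> (inv_into {1..n-k} (compl_map k n \<alpha>) i) = i" by (rule f_inv_into_f[OF i1])
        have e2: "compl_map k n \<beta> (inv_into {1..n-k} (compl_map k n \<beta>) (\<sigma> i)) = \<sigma> i" by (rule f_inv_into_f[OF i2])
        have "dsum k n \<alpha> \<beta> (submat X \<alpha> \<beta>) (delmat k n X \<alpha> \<beta>) i (\<sigma> i)
            = delmat k n X \<alpha> \<beta> (inv_into {1..n-k} (compl_map k n \<alpha>) i) (inv_into {1..n-k} (compl_map k n \<beta>) (\<sigma> i))"
          using False nb unfolding A_def B_def by (rule dsum_out)
        also have "\<dots> = X i (\<sigma> i)" unfolding delmat_def e1 e2 ..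
        finally show ?thesis .
      qed
    qed
    moreover have "\<beta> = enum k (\<sigma> ` \<alpha> ` {1..k})" using True unfolding A_def .
    ultimately show ?thesis by (subst if_P) assumption+
  next
    case False
    have "\<not> \<sigma> ` A \<subseteq> B"
    proof
      assume sub: "\<sigma> ` A \<subseteq> B"
      have "\<sigma> ` A = B" using card_subset_eq[OF finB sub] cB c\<sigma>A by simp
      then have "\<beta> = enum k (\<sigma> ` A)" using Q_enum[OF \<beta>] by (simp add: B_def)
      then show False using False by simp
    qed
    then obtain i where iA: "i \<in> A" and nb: "\<sigma> i \<notin> B" by blast
    have i: "i \<in> {1..n}" using iA sA by blast
    have "dsum k n \<alpha> \<beta> (submat X \<alpha> \<beta>) (delmat k n X \<alpha> \<beta>) i (\<sigma> i) = 0"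
      using iA nb unfolding A_def B_def by (rule dsum_mix)
    then have "(\<Prod>i=1..n. dsum k n \<alpha> \<beta> (submat X \<alpha> \<beta>) (delmat k n X \<alpha> \<beta>) i (\<sigma> i)) = 0"
      using i by (intro prod_zero) auto
    moreover have "\<beta> \<noteq> enum k (\<sigma> ` \<alpha> ` {1..k})" using False unfolding A_def .
    ultimately show ?thesis by (subst if_not_P) assumption+
  qed
qed

theorem mainTheorem4:
  fixes n k :: nat and \<chi> :: "(nat \<Rightarrow> nat) \<Rightarrow> complex"
    and X :: "nat \<Rightarrow> nat \<Rightarrow> complex" and \<alpha> :: "nat \<Rightarrow> nat"
  assumes "1 \<le> n" and "irreducible_character n \<chi>"
    and "1 \<le> k" and "k \<le> n" and "\<alpha> \<in> Q k n"
  shows "immanant n \<chi> X =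
    (\<Sum>\<beta>\<in>Q k n. immanant n \<chi> (dsum k n \<alpha> \<beta> (submat X \<alpha> \<beta>) (delmat k n X \<alpha> \<beta>)))"
proof -
  define e where "e = (\<lambda>\<sigma>::nat\<Rightarrow>nat. enum k (\<sigma> ` \<alpha> ` {1..k}))"
  have eQ: "e \<sigma> \<in> Q k n" if "\<sigma> \<in> Sym n" for \<sigma>
  proof -
    have perm: "\<sigma> permutes {1..n}" using that by (simp add: Sym_def)
    have "\<sigma> ` \<alpha> ` {1..k} \<subseteq> {1..n}" using card_Q_img(2)[OF assms(5)] permutes_in_image[OF perm] by auto
    moreover have "card (\<sigma> ` \<alpha> ` {1..k}) = k"
      using card_Q_img(1)[OF assms(5)] card_image[OF inj_on_subset[OF permutes_inj[OF perm] subset_UNIV]] by simp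
    ultimately show ?thesis unfolding e_def by (rule enum_Q)
  qed
  have "(\<Sum>\<beta>\<in>Q k n. immanant n \<chi> (dsum k n \<alpha> \<beta> (submat X \<alpha> \<beta>) (delmat k n X \<alpha> \<beta>)))
      = (\<Sum>\<beta>\<in>Q k n. \<Sum>\<sigma>\<in>Sym n. (if \<beta> = e \<sigma> then \<chi> \<sigma> * (\<Prod>i=1..n. X i (\<sigma> i)) else 0))"
    unfolding immanant_def
  proof (intro sum.cong refl)
    fix \<beta> \<sigma> assume b: "\<beta> \<in> Q k n" and s: "\<sigma> \<in> Sym n"
    have eq: "(\<Prod>i=1..n. dsum k n \<alpha> \<beta> (submat X \<alpha> \<beta>) (delmat k n X \<alpha> \<beta>) i (\<sigma> i)) =
     (if \<beta> = e \<sigma> then (\<Prod>i=1..n. X i (\<sigma> i)) else 0)"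
      unfolding e_def by (rule key[OF assms(5) assms(4) s b])
    show "\<chi> \<sigma> * (\<Prod>i=1..n. dsum k n \<alpha> \<beta> (submat X \<alpha> \<beta>) (delmat k n X \<alpha> \<beta>) i (\<sigma> i)) =
      (if \<beta> = e \<sigma> then \<chi> \<sigma> * (\<Prod>i=1..n. X i (\<sigma> i)) else 0)"
      unfolding eq by (rule mult_if0)
  qed
  also have "\<dots> = (\<Sum>\<sigma>\<in>Sym n. \<Sum>\<beta>\<in>Q k n. (if \<beta> = e \<sigma> then \<chi> \<sigma> * (\<Prod>i=1..n. X i (\<sigma> i)) else 0))"
    by (rule sum.swap)
  also have "\<dots> = (\<Sum>\<sigma>\<in>Sym n. \<chi> \<sigma> * (\<Prod>i=1..n. X i (\<sigma> i)))"
  proof (intro sum.cong refl)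
    fix \<sigma> assume s: "\<sigma> \<in> Sym n"
    show "(\<Sum>\<beta>\<in>Q k n. (if \<beta> = e \<sigma> then \<chi> \<sigma> * (\<Prod>i=1..n. X i (\<sigma> i)) else 0)) = \<chi> \<sigma> * (\<Prod>i=1..n. X i (\<sigma> i))"
      unfolding sum.delta[OF finite_Q] using eQ[OF s] by (simp only: if_True)
  qed
  finally show ?thesis unfolding immanant_def by (rule sym)
qed

end
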